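(* Let $q(x_1,\ldots,x_m)=(q_1(x_1),\ldots,q_m(x_m))$ with each $q_i(x_i)\in\mathbb{R}$, where each input component $x_i$ lies in a metric space with metric $d$. Define the distance between inputs $x=(x_1,\ldots,x_m)$ and $x'=(x'_1,\ldots,x'_m)$ as $d(x,x')=\|(d(x_1,x'_1),\ldots,d(x_m,x'_m))\|_p$ for some $p\in[1,\infty]$. For each $i$ let $\tilde q_i$ be an $\epsilon_i$-differentially private mechanism for $q_i$, the mechanisms using independent randomness. Then the mechanism $\tilde q=(\tilde q_1,\ldots,\tilde q_m)$ is $\|(\epsilon_1,\ldots,\epsilon_m)\|_{p^*}$-differentially private with respect to $d$, where $\ell_{p^*}$ is the dual norm of $\ell_p$ (i.e. $1/p+1/p^*=1$).
   Context: A randomized mechanism $M$ on a metric space with metric $d$ is $\epsilon$-differentially private ($\epsilon\ge0$) if for all inputs $x,x'$ with $d(x,x')\le D$ and every set $S$ of outputs, $\Pr[M(x)\in S]\le e^{D\epsilon}\Pr[M(x')\in S]$. For $\tilde q_i$ this is with respect to the metric $d$ on the $i$-th input component; for $\tilde q$ it is with respect to the $\ell_p$-combined distance above, with output sets $S\subseteq\mathbb{R}^m$. *)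

theory Defs
  imports "HOL-Probability.Probability"
begin

definition lp_norm :: "ereal \<Rightarrow> nat \<Rightarrow> (nat \<Rightarrow> real) \<Rightarrow> real" where
  "lp_norm p m v =
     (if p = \<infinity> then Max (insert 0 ((\<lambda>i. \<bar>v i\<bar>) ` {..<m}))
      else (\<Sum>i<m. \<bar>v i\<bar> powr (real_of_ereal p)) powr (1 / real_of_ereal p))"

definition conj_exp :: "ereal \<Rightarrow> ereal" where
  "conj_exp p = (if p = 1 then \<infinity> else if p = \<infinity> then 1 else p / (p - 1))"

definition diff_private ::
  "'b measure \<Rightarrow> ('x \<Rightarrow> 'x \<Rightarrow> real) \<Rightarrow> ('x \<Rightarrow> 'b measure) \<Rightarrow> real \<Rightarrow> bool" where
  "diff_private N d M eps \<longleftrightarrow> 0 \<le> eps \<and>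
     (\<forall>x x' D. d x x' \<le> D \<longrightarrow>
        (\<forall>S \<in> sets N. measure (M x) S \<le> exp (D * eps) * measure (M x') S))"

end

theory Submission imports Defs begin


lemma dens_bound:
  fixes c :: real
  assumes mu: "prob_space \<mu>" and nu: "prob_space \<nu>" and sets: "sets \<mu> = sets \<nu>"
    and le: "\<And>A. A \<in> sets \<nu> \<Longrightarrow> emeasure \<mu> A \<le> ennreal c * emeasure \<nu> A"
    and c: "0 \<le> c"
  shows "\<exists>f. f \<in> borel_measurable \<nu> \<and> (\<forall>x. f x \<le> ennreal c) \<and> \<mu> = density \<nu> f"
proof -
  interpret N: prob_space \<nu> by fact
  interpret U: prob_space \<mu> by fact
  have ac: "absolutely_continuous \<nu> \<mu>"
    unfolding absolutely_continuous_def
  proof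
    fix A assume "A \<in> null_sets \<nu>"
    then have "A \<in> sets \<nu>" "emeasure \<nu> A = 0" by auto
    with le[of A] sets show "A \<in> null_sets \<mu>" by (auto simp: null_sets_def)
  qed
  define g where "g = RN_deriv \<nu> \<mu>"
  have gm[measurable]: "g \<in> borel_measurable \<nu>" unfolding g_def by simp
  have dg: "density \<nu> g = \<mu>" unfolding g_def using N.density_RN_deriv[OF ac sets] .
  have AE: "AE x in \<nu>. g x \<le> ennreal c"
  proof (rule ccontr)
    assume nAE: "\<not> (AE x in \<nu>. g x \<le> ennreal c)"
    define B where "B = {x\<in>space \<nu>. ennreal c < g x}"
    have B[measurable]: "B \<in> sets \<nu>" unfolding B_def by measurable
    have n2: "\<not> (AE x in \<nu>. g x * indicator B x \<le> ennreal c * indicator B x)"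
    proof
      assume "AE x in \<nu>. g x * indicator B x \<le> ennreal c * indicator B x"
      then have "AE x in \<nu>. g x \<le> ennreal c"
      proof (rule AE_mp[OF _ AE_I2[OF impI]])
        fix x assume x: "x \<in> space \<nu>" and h: "g x * indicator B x \<le> ennreal c * indicator B x"
        show "g x \<le> ennreal c"
        proof (cases "x \<in> B")
          case True then show ?thesis using h by simp
        next
          case False then show ?thesis using x unfolding B_def by auto
        qed
      qed
      with nAE show False by simp
    qed
    have fin: "(\<integral>\<^sup>+x. ennreal c * indicator B x \<partial>\<nu>) \<noteq> \<infinity>"
      using B by (simp add: nn_integral_cmult_indicator ennreal_mult_eq_top_iff)
    have "(\<integral>\<^sup>+x. ennreal c * indicator B x \<partial>\<nu>) < (\<integral>\<^sup>+x. g x * indicator B x \<partial>\<nu>)"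
      by (rule nn_integral_less[OF _ _ fin _ n2]) (auto intro!: AE_I2 simp: B_def indicator_def less_imp_le)
    also have "\<dots> = emeasure \<mu> B" using dg emeasure_density[OF gm B] by simp
    also have "\<dots> \<le> ennreal c * emeasure \<nu> B" using le B by simp
    also have "\<dots> = (\<integral>\<^sup>+x. ennreal c * indicator B x \<partial>\<nu>)" using B by (simp add: nn_integral_cmult_indicator)
    finally show False by simp
  qed
  define f where "f x = min (g x) (ennreal c)" for x
  have fm: "f \<in> borel_measurable \<nu>" unfolding f_def by measurable
  have "density \<nu> f = density \<nu> g"
    using fm gm by (rule density_cong) (use AE in \<open>auto simp: f_def min_def\<close>)
  then show ?thesis using dg fm by (intro exI[of _ f]) (auto simp: f_def)
qed


lemma prod_density:
  fixes N \<mu> :: "'i \<Rightarrow> 'b measure"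
  assumes fin: "finite I"
    and pN: "\<And>i. prob_space (N i)" and pU: "\<And>i. prob_space (\<mu> i)"
    and fm: "\<And>i. i \<in> I \<Longrightarrow> f i \<in> borel_measurable (N i)"
    and dens: "\<And>i. i \<in> I \<Longrightarrow> \<mu> i = density (N i) (f i)"
  shows "PiM I \<mu> = density (PiM I N) (\<lambda>x. \<Prod>i\<in>I. f i (x i))"
proof -
  interpret U: product_sigma_finite \<mu>
    unfolding product_sigma_finite_def using pU by (simp add: prob_space_imp_sigma_finite)
  interpret NN: product_sigma_finite N
    unfolding product_sigma_finite_def using pN by (simp add: prob_space_imp_sigma_finite)
  have sets_eq: "sets (PiM I N) = sets (PiM I \<mu>)"
    by (rule sets_PiM_cong) (auto simp: dens)
  have Fm: "(\<lambda>x. \<Prod>i\<in>I. f i (x i)) \<in> borel_measurable (PiM I N)"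
    using fm by (intro borel_measurable_prod_ennreal) auto
  show ?thesis
  proof (rule U.PiM_eqI[OF fin, symmetric])
    show "sets (density (PiM I N) (\<lambda>x. \<Prod>i\<in>I. f i (x i))) = sets (PiM I \<mu>)"
      using sets_eq by simp
    fix A assume A: "\<And>i. i \<in> I \<Longrightarrow> A i \<in> sets (\<mu> i)"
    then have A': "\<And>i. i \<in> I \<Longrightarrow> A i \<in> sets (N i)" using dens by simp
    have PA: "PiE I A \<in> sets (PiM I N)" using A' fin by (intro sets_PiM_I_finite) auto
    have "emeasure (density (PiM I N) (\<lambda>x. \<Prod>i\<in>I. f i (x i))) (PiE I A)
        = (\<integral>\<^sup>+ x. (\<Prod>i\<in>I. f i (x i)) * indicator (PiE I A) x \<partial>PiM I N)"
      by (rule emeasure_density[OF Fm PA])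
    also have "\<dots> = (\<integral>\<^sup>+ x. (\<Prod>i\<in>I. f i (x i) * indicator (A i) (x i)) \<partial>PiM I N)"
    proof (rule nn_integral_cong)
      fix x assume x: "x \<in> space (PiM I N)"
      then have ext: "x \<in> extensional I" by (simp add: space_PiM PiE_def)
      have "indicator (PiE I A) x = (\<Prod>i\<in>I. indicator (A i) (x i) :: ennreal)"
      proof (cases "x \<in> PiE I A")
        case True then show ?thesis by (auto simp: indicator_def PiE_def intro!: prod.neutral)
      next
        case False
        then obtain j where "j \<in> I" "x j \<notin> A j" using ext by (auto simp: PiE_def)
        then show ?thesis using False fin by (auto simp: indicator_def intro!: prod_zero[symmetric])
      qed
      then show "(\<Prod>i\<in>I. f i (x i)) * indicator (PiE I A) x = (\<Prod>i\<in>I. f i (x i) * indicator (A i) (x i))"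
        by (simp add: prod.distrib)
    qed
    also have "\<dots> = (\<Prod>i\<in>I. \<integral>\<^sup>+ y. f i y * indicator (A i) y \<partial>N i)"
      using fin fm A' by (intro NN.product_nn_integral_prod) auto
    also have "\<dots> = (\<Prod>i\<in>I. emeasure (\<mu> i) (A i))"
      using fm A' dens by (intro prod.cong refl) (simp add: emeasure_density)
    finally show "emeasure (density (PiM I N) (\<lambda>x. \<Prod>i\<in>I. f i (x i))) (PiE I A) = (\<Prod>i\<in>I. emeasure (\<mu> i) (A i))" .
  qed
qed


lemma prod_bound:
  fixes \<nu> \<mu> :: "'i \<Rightarrow> 'b measure"
  assumes fin: "finite I"
    and pN: "\<And>i. prob_space (\<nu> i)" and pU: "\<And>i. prob_space (\<mu> i)"
    and sets: "\<And>i. i \<in> I \<Longrightarrow> sets (\<mu> i) = sets (\<nu> i)"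
    and le: "\<And>i A. i \<in> I \<Longrightarrow> A \<in> sets (\<nu> i) \<Longrightarrow> emeasure (\<mu> i) A \<le> ennreal (c i) * emeasure (\<nu> i) A"
    and c: "\<And>i. 0 \<le> c i"
    and S: "S \<in> sets (PiM I \<nu>)"
  shows "emeasure (PiM I \<mu>) S \<le> ennreal (\<Prod>i\<in>I. c i) * emeasure (PiM I \<nu>) S"
proof -
  have "\<forall>i. \<exists>f. i \<in> I \<longrightarrow> (f \<in> borel_measurable (\<nu> i) \<and> (\<forall>x. f x \<le> ennreal (c i)) \<and> \<mu> i = density (\<nu> i) f)"
    using dens_bound[OF pU pN sets le c] by blast
  then obtain f where f: "\<And>i. i \<in> I \<Longrightarrow> f i \<in> borel_measurable (\<nu> i) \<and> (\<forall>x. f i x \<le> ennreal (c i)) \<and> \<mu> i = density (\<nu> i) (f i)"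
    by metis
  have eq: "PiM I \<mu> = density (PiM I \<nu>) (\<lambda>x. \<Prod>i\<in>I. f i (x i))"
    by (rule prod_density[OF fin pN pU]) (use f in auto)
  have Fm: "(\<lambda>x. \<Prod>i\<in>I. f i (x i)) \<in> borel_measurable (PiM I \<nu>)"
    using f by (intro borel_measurable_prod_ennreal measurable_compose[OF measurable_component_singleton]) auto
  have Fle: "(\<Prod>i\<in>I. f i (x i)) \<le> ennreal (\<Prod>i\<in>I. c i)" for x
  proof -
    have "(\<Prod>i\<in>I. f i (x i)) \<le> (\<Prod>i\<in>I. ennreal (c i))"
      by (rule prod_mono_ennreal) (use f in auto)
    also have "\<dots> = ennreal (\<Prod>i\<in>I. c i)" using c by (simp add: prod_ennreal)
    finally show ?thesis .
  qed
  have "emeasure (PiM I \<mu>) S = (\<integral>\<^sup>+ x. (\<Prod>i\<in>I. f i (x i)) * indicator S x \<partial>PiM I \<nu>)"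
    unfolding eq by (rule emeasure_density[OF Fm S])
  also have "\<dots> \<le> (\<integral>\<^sup>+ x. ennreal (\<Prod>i\<in>I. c i) * indicator S x \<partial>PiM I \<nu>)"
    by (intro nn_integral_mono mult_right_mono Fle) auto
  also have "\<dots> = ennreal (\<Prod>i\<in>I. c i) * emeasure (PiM I \<nu>) S"
    using S by (simp add: nn_integral_cmult_indicator)
  finally show ?thesis .
qed


lemma sum_powr_zero:
  fixes a :: "'i \<Rightarrow> real"
  assumes fin: "finite I" and a: "\<And>i. i \<in> I \<Longrightarrow> 0 \<le> a i" and p: "p > 0"
    and z: "(\<Sum>i\<in>I. a i powr p) powr (1/p) = 0"
  shows "\<forall>i\<in>I. a i = 0"
proof -
  have "(\<Sum>i\<in>I. a i powr p) = 0" using z by simp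
  then have "\<forall>j\<in>I. a j powr p = 0" using fin by (subst (asm) sum_nonneg_eq_0_iff) auto
  then show ?thesis by simp
qed

lemma holder_sum:
  fixes a b :: "'i \<Rightarrow> real"
  assumes fin: "finite I" and p: "p > 1" and q: "q > 1" and pq: "1/p + 1/q = 1"
    and a: "\<And>i. i \<in> I \<Longrightarrow> 0 \<le> a i" and b: "\<And>i. i \<in> I \<Longrightarrow> 0 \<le> b i"
  shows "(\<Sum>i\<in>I. a i * b i) \<le> (\<Sum>i\<in>I. a i powr p) powr (1/p) * (\<Sum>i\<in>I. b i powr q) powr (1/q)"
proof -
  define A where "A = (\<Sum>i\<in>I. a i powr p) powr (1/p)"
  define B where "B = (\<Sum>i\<in>I. b i powr q) powr (1/q)"
  have SA: "0 \<le> (\<Sum>i\<in>I. a i powr p)" by (intro sum_nonneg) auto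
  have SB: "0 \<le> (\<Sum>i\<in>I. b i powr q)" by (intro sum_nonneg) auto
  have A0: "0 \<le> A" "0 \<le> B" unfolding A_def B_def by auto
  show ?thesis
  proof (cases "A = 0 \<or> B = 0")
    case True
    have "\<forall>i\<in>I. a i * b i = 0"
    proof (cases "A = 0")
      case True
      then have "\<forall>i\<in>I. a i = 0" using sum_powr_zero[of I a p] fin a p unfolding A_def by fastforce
      then show ?thesis by simp
    next
      case False
      then have "B = 0" using \<open>A = 0 \<or> B = 0\<close> by simp
      then have "\<forall>i\<in>I. b i = 0" using sum_powr_zero[of I b q] fin b q unfolding B_def by fastforce
      then show ?thesis by simp
    qed
    then have "(\<Sum>i\<in>I. a i * b i) = 0" by (intro sum.neutral) auto
    then show ?thesis unfolding A_def[symmetric] B_def[symmetric] using A0 by simp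
  next
    case False
    then have Ap: "A > 0" "B > 0" using A0 by auto
    have Ap': "A powr p = (\<Sum>i\<in>I. a i powr p)" unfolding A_def using SA p
      by (simp add: powr_powr)
    have Bq': "B powr q = (\<Sum>i\<in>I. b i powr q)" unfolding B_def using SB q
      by (simp add: powr_powr)
    have "(\<Sum>i\<in>I. (a i / A) * (b i / B)) \<le> (\<Sum>i\<in>I. (a i / A) powr p / p + (b i / B) powr q / q)"
      using a b Ap by (intro sum_mono Youngs_inequality[OF p q pq]) auto
    also have "\<dots> = (\<Sum>i\<in>I. a i powr p) / A powr p / p + (\<Sum>i\<in>I. b i powr q) / B powr q / q"
      using a b Ap by (simp add: sum.distrib powr_divide sum_divide_distrib)
    also have "\<dots> = 1" unfolding Ap'[symmetric] Bq'[symmetric] using Ap pq by simp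
    finally have "(\<Sum>i\<in>I. a i * b i) / (A * B) \<le> 1"
      by (simp add: sum_divide_distrib)
    then show ?thesis unfolding A_def[symmetric] B_def[symmetric] using Ap
      by (simp add: divide_le_eq)
  qed
qed


lemma lp_norm_nonneg: "0 \<le> lp_norm p m v"
  unfolding lp_norm_def by (auto intro: Max_ge_iff[THEN iffD2])

lemma lp_holder:
  fixes a b :: "nat \<Rightarrow> real"
  assumes p: "1 \<le> p" and a: "\<And>i. i < m \<Longrightarrow> 0 \<le> a i" and b: "\<And>i. i < m \<Longrightarrow> 0 \<le> b i"
  shows "(\<Sum>i<m. a i * b i) \<le> lp_norm p m a * lp_norm (conj_exp p) m b"
proof -
  have maxge: "\<bar>v i\<bar> \<le> Max (insert 0 ((\<lambda>i. \<bar>v i\<bar>) ` {..<m}))" if "i < m" for v :: "nat \<Rightarrow> real" and i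
    using that by (intro Max_ge) auto
  consider "p = \<infinity>" | "p = 1" | r where "p = ereal r" "1 < r"
    using p by (cases p) (auto simp: order.order_iff_strict)
  then show ?thesis
  proof cases
    case 1
    let ?A = "Max (insert 0 ((\<lambda>i. \<bar>a i\<bar>) ` {..<m}))"
    have "(\<Sum>i<m. a i * b i) \<le> (\<Sum>i<m. ?A * b i)"
      using maxge[of _ a] a b by (intro sum_mono mult_right_mono) force+
    also have "\<dots> = ?A * (\<Sum>i<m. \<bar>b i\<bar> powr 1) powr 1"
    proof -
      have "(\<Sum>i<m. \<bar>b i\<bar> powr 1) = (\<Sum>i<m. b i)" using b by (intro sum.cong) auto
      moreover have "0 \<le> (\<Sum>i<m. b i)" using b by (intro sum_nonneg) auto
      ultimately show ?thesis by (simp add: sum_distrib_left)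
    qed
    finally show ?thesis using 1 by (simp add: lp_norm_def conj_exp_def)
  next
    case 2
    let ?B = "Max (insert 0 ((\<lambda>i. \<bar>b i\<bar>) ` {..<m}))"
    have "(\<Sum>i<m. a i * b i) \<le> (\<Sum>i<m. a i * ?B)"
      using maxge[of _ b] a b by (intro sum_mono mult_left_mono) force+
    also have "\<dots> = (\<Sum>i<m. \<bar>a i\<bar> powr 1) powr 1 * ?B"
    proof -
      have "(\<Sum>i<m. \<bar>a i\<bar> powr 1) = (\<Sum>i<m. a i)" using a by (intro sum.cong) auto
      moreover have "0 \<le> (\<Sum>i<m. a i)" using a by (intro sum_nonneg) auto
      ultimately show ?thesis by (simp add: sum_distrib_right)
    qed
    finally show ?thesis using 2 by (simp add: lp_norm_def conj_exp_def)
  next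
    case 3
    define q where "q = r / (r - 1)"
    have q: "q > 1" "1/r + 1/q = 1" using 3 unfolding q_def by (auto simp: field_simps)
    have e1: "ereal r - 1 = ereal (r - 1)" by (simp add: one_ereal_def)
    have e2: "ereal r / (ereal r - 1) = ereal q" unfolding e1 q_def using 3 by simp
    have ce: "conj_exp p = ereal q" using 3 e2 unfolding conj_exp_def by auto
    have "(\<Sum>i<m. a i * b i) = (\<Sum>i<m. \<bar>a i\<bar> * \<bar>b i\<bar>)" using a b by (intro sum.cong) auto
    also have "\<dots> \<le> (\<Sum>i<m. \<bar>a i\<bar> powr r) powr (1/r) * (\<Sum>i<m. \<bar>b i\<bar> powr q) powr (1/q)"
      by (rule holder_sum) (use 3 q in auto)
    finally show ?thesis using 3 ce by (simp add: lp_norm_def)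
  qed
qed


lemma ps_emeasure: "prob_space N \<Longrightarrow> emeasure N A = ennreal (measure N A)"
proof -
  assume "prob_space N"
  then interpret prob_space N .
  show ?thesis by (rule emeasure_eq_measure)
qed

theorem theorem4:
  fixes M :: "nat \<Rightarrow> 'a::metric_space \<Rightarrow> real measure"
    and eps :: "nat \<Rightarrow> real" and m :: nat and p :: ereal
  assumes "1 \<le> p"
    and "\<And>i y. i < m \<Longrightarrow> prob_space (M i y)"
    and "\<And>i y. i < m \<Longrightarrow> sets (M i y) = sets borel"
    and "\<And>i. i < m \<Longrightarrow> diff_private borel dist (M i) (eps i)"
  shows "diff_private (PiM {..<m} (\<lambda>_. borel))
           (\<lambda>x x'. lp_norm p m (\<lambda>i. dist (x i) (x' i)))
           (\<lambda>x. PiM {..<m} (\<lambda>i. M i (x i)))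
           (lp_norm (conj_exp p) m eps)"
proof -
  note p = assms(1) and pr = assms(2) and se = assms(3) and dp = assms(4)
  have epos: "\<And>i. i < m \<Longrightarrow> 0 \<le> eps i" using dp unfolding diff_private_def by blast
  have dpi: "\<And>i y y' A. i < m \<Longrightarrow> A \<in> sets borel \<Longrightarrow>
      measure (M i y) A \<le> exp (dist y y' * eps i) * measure (M i y') A"
    using dp unfolding diff_private_def by blast
  let ?L = "lp_norm (conj_exp p) m eps"
  show ?thesis unfolding diff_private_def
  proof (intro conjI allI impI ballI)
    show "0 \<le> ?L" by (rule lp_norm_nonneg)
    fix x x' :: "nat \<Rightarrow> 'a" and D :: real and S
    assume D: "lp_norm p m (\<lambda>i. dist (x i) (x' i)) \<le> D"
      and S: "S \<in> sets (PiM {..<m} (\<lambda>_. borel :: real measure))"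
    define \<mu> where "\<mu> i = (if i < m then M i (x i) else return borel (0::real))" for i
    define \<nu> where "\<nu> i = (if i < m then M i (x' i) else return borel (0::real))" for i
    define c where "c i = (if i < m then exp (dist (x i) (x' i) * eps i) else 1)" for i
    have pU: "prob_space (\<mu> i)" for i unfolding \<mu>_def using pr by (auto intro: prob_space_return)
    have pN: "prob_space (\<nu> i)" for i unfolding \<nu>_def using pr by (auto intro: prob_space_return)
    have sU: "sets (\<mu> i) = sets borel" if "i < m" for i unfolding \<mu>_def using se that by auto
    have sN: "sets (\<nu> i) = sets borel" if "i < m" for i unfolding \<nu>_def using se that by auto
    have le: "emeasure (\<mu> i) A \<le> ennreal (c i) * emeasure (\<nu> i) A"
      if i: "i \<in> {..<m}" and A: "A \<in> sets (\<nu> i)" for i A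
    proof -
      have A': "A \<in> sets borel" using A sN i by auto
      have "emeasure (\<mu> i) A = ennreal (measure (\<mu> i) A)"
        using pU[of i] by (simp add: ps_emeasure)
      also have "\<dots> \<le> ennreal (c i * measure (\<nu> i) A)"
        using dpi[of i A "x i" "x' i"] i A' unfolding \<mu>_def \<nu>_def c_def
        by (intro ennreal_leI) auto
      also have "\<dots> = ennreal (c i) * emeasure (\<nu> i) A"
        using pN[of i] by (simp add: ps_emeasure ennreal_mult c_def)
      finally show ?thesis .
    qed
    have S': "S \<in> sets (PiM {..<m} \<nu>)"
      using S sN by (subst sets_PiM_cong[OF refl]) auto
    have main: "emeasure (PiM {..<m} \<mu>) S \<le> ennreal (\<Prod>i\<in>{..<m}. c i) * emeasure (PiM {..<m} \<nu>) S"
      by (rule prod_bound[OF _ pN pU _ le _ S']) (auto simp: sU sN c_def)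
    have PU: "prob_space (PiM {..<m} \<mu>)" by (rule prob_space_PiM) (use pU in auto)
    have PN: "prob_space (PiM {..<m} \<nu>)" by (rule prob_space_PiM) (use pN in auto)
    have cpos: "0 \<le> (\<Prod>i\<in>{..<m}. c i)" by (intro prod_nonneg) (auto simp: c_def)
    have real_main: "measure (PiM {..<m} \<mu>) S \<le> (\<Prod>i\<in>{..<m}. c i) * measure (PiM {..<m} \<nu>) S"
    proof -
      have nn: "0 \<le> (\<Prod>i\<in>{..<m}. c i) * measure (PiM {..<m} \<nu>) S"
        using cpos by simp
      have "measure (PiM {..<m} \<mu>) S \<le> (\<Prod>i\<in>{..<m}. c i) * measure (PiM {..<m} \<nu>) S \<or>
         (measure (PiM {..<m} \<mu>) S \<le> 0 \<and> (\<Prod>i\<in>{..<m}. c i) * measure (PiM {..<m} \<nu>) S \<le> 0)"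
        using main PU PN cpos
        by (simp add: ps_emeasure ennreal_mult[symmetric] ennreal_le_iff2 del: ennreal_mult)
      then show ?thesis using nn by linarith
    qed
    have cprod: "(\<Prod>i\<in>{..<m}. c i) = exp (\<Sum>i<m. dist (x i) (x' i) * eps i)"
      by (simp add: exp_sum c_def)
    have "(\<Sum>i<m. dist (x i) (x' i) * eps i) \<le> lp_norm p m (\<lambda>i. dist (x i) (x' i)) * ?L"
      by (rule lp_holder[OF p]) (auto simp: epos)
    also have "\<dots> \<le> D * ?L" using D lp_norm_nonneg by (intro mult_right_mono) auto
    finally have "(\<Prod>i\<in>{..<m}. c i) \<le> exp (D * ?L)" unfolding cprod by simp
    then have "measure (PiM {..<m} \<mu>) S \<le> exp (D * ?L) * measure (PiM {..<m} \<nu>) S"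
      using real_main by (meson measure_nonneg mult_right_mono order_trans)
    moreover have "PiM {..<m} \<mu> = PiM {..<m} (\<lambda>i. M i (x i))" by (rule PiM_cong) (auto simp: \<mu>_def)
    moreover have "PiM {..<m} \<nu> = PiM {..<m} (\<lambda>i. M i (x' i))" by (rule PiM_cong) (auto simp: \<nu>_def)
    ultimately show "measure (PiM {..<m} (\<lambda>i. M i (x i))) S \<le> exp (D * ?L) * measure (PiM {..<m} (\<lambda>i. M i (x' i))) S"
      by simp
  qed
qed

end
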